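(* Let $r:\mathcal V\to\mathbb P(\mathcal L)$ be a discrete Ribaucour sphere congruence and $u$ a totally umbilic envelope of $r$ with point sphere map $u^p$. Then for every face $(ijkl)$ the face cross-ratios coincide: $\mathrm{cr}(r_i,r_j,r_k,r_l)=\mathrm{cr}(u^p_i,u^p_j,u^p_k,u^p_l)$. In particular, $u^p$ is isothermic if and only if $r$ is isothermic.
   Context: $\mathbb{R}^{4,2}$ is $\mathbb R^6$ with a symmetric bilinear form $\langle\cdot,\cdot\rangle$ of signature $(4,2)$, $\mathcal L$ its light cone, $\mathbb P(\mathcal L)$ the set of oriented spheres; black letters denote homogeneous coordinates. A point sphere complex $\mathfrak p$, $\langle\mathfrak p,\mathfrak p\rangle=-1$, is fixed; point spheres are spheres orthogonal to $\mathfrak p$; each contact element (2-dim totally null subspace) contains exactly one point sphere. $\mathcal V$ is the vertex set of a simply connected subset of $\mathbb Z^2$; faces $(ijkl)$ are listed in cyclic order. A discrete Legendre map is a map $f$ from $\mathcal V$ to contact elements with adjacent contact elements sharing a sphere (its curvature sphere on that edge); it envelops a sphere congruence $r$ if $r_i\in f_i$. A discrete Legendre map is totally umbilic if all its curvature spheres coincide (a constant sphere $n$) and its point sphere map is a circular net for any choice of point sphere complex; a totally umbilic envelope of $r$ then has the form $u_i=\langle\!\langle\mathfrak n,\mathfrak r_i\rangle\!\rangle$. A discrete Ribaucour sphere congruence is a non-degenerate discrete conjugate net $r:\mathcal V\to\mathbb P(\mathcal L)$ (the coordinates of the four spheres of each face span a 3-dim subspace of signature $(2,1)$ or $(1,2)$).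 The cross-ratio of four spheres or point spheres is $\mathrm{cr}(s_1,s_2,s_3,s_4)=\frac{\langle\mathfrak s_1,\mathfrak s_2\rangle\langle\mathfrak s_3,\mathfrak s_4\rangle}{\langle\mathfrak s_2,\mathfrak s_3\rangle\langle\mathfrak s_4,\mathfrak s_1\rangle}$. A map $x:\mathcal V\to\mathbb P(\mathcal L)$ with planar faces is isothermic if there is a function $a$ on edges, taking equal values on opposite edges of every face, such that $\mathrm{cr}(x_i,x_j,x_k,x_l)=a_{ij}/a_{jk}$ on every face $(ijkl)$. *)

theory Defs
  imports "HOL-Analysis.Analysis"
begin

text \<open>R^{4,2}: real^6 with the standard symmetric bilinear form of signature (4,2).
 Spheres (points of P(L)) are represented by homogeneous coordinates: nonzero null vectors.\<close>

definition lf :: "real^6 \<Rightarrow> real^6 \<Rightarrow> real" where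
  "lf x y = x$1*y$1 + x$2*y$2 + x$3*y$3 + x$4*y$4 - x$5*y$5 - x$6*y$6"

definition lightlike :: "real^6 \<Rightarrow> bool" where
  "lightlike x \<longleftrightarrow> x \<noteq> 0 \<and> lf x x = 0"

definition same_point :: "real^6 \<Rightarrow> real^6 \<Rightarrow> bool" where
  "same_point x y \<longleftrightarrow> (\<exists>c::real. c \<noteq> 0 \<and> y = c *\<^sub>R x)"

definition point_sphere_complex :: "real^6 \<Rightarrow> bool" where
  "point_sphere_complex p \<longleftrightarrow> lf p p = -1"

definition contact_element :: "(real^6) set \<Rightarrow> bool" where
  "contact_element W \<longleftrightarrow> subspace W \<and> dim W = 2 \<and> (\<forall>x\<in>W. \<forall>y\<in>W. lf x y = 0)"

definition point_sphere :: "real^6 \<Rightarrow> (real^6) set \<Rightarrow> real^6" where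
  "point_sphere p W = (SOME x. x \<in> W \<and> x \<noteq> 0 \<and> lf x p = 0)"

definition cr :: "real^6 \<Rightarrow> real^6 \<Rightarrow> real^6 \<Rightarrow> real^6 \<Rightarrow> real" where
  "cr s1 s2 s3 s4 = (lf s1 s2 * lf s3 s4) / (lf s2 s3 * lf s4 s1)"

definition adjacent :: "int \<times> int \<Rightarrow> int \<times> int \<Rightarrow> bool" where
  "adjacent i j \<longleftrightarrow> \<bar>fst i - fst j\<bar> + \<bar>snd i - snd j\<bar> = 1"

definition edge :: "(int \<times> int) set \<Rightarrow> int \<times> int \<Rightarrow> int \<times> int \<Rightarrow> bool" where
  "edge V i j \<longleftrightarrow> i \<in> V \<and> j \<in> V \<and> adjacent i j"

text \<open>(i,j,k,l) is a face listed in cyclic order: the four vertices of a unit square of Z^2,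
  all in V, traversed cyclically (any starting vertex, any orientation).\<close>
definition is_face :: "(int \<times> int) set \<Rightarrow> int \<times> int \<Rightarrow> int \<times> int \<Rightarrow> int \<times> int \<Rightarrow> int \<times> int \<Rightarrow> bool" where
  "is_face V i j k l \<longleftrightarrow> edge V i j \<and> edge V j k \<and> edge V k l \<and> edge V l i \<and> i \<noteq> k \<and> j \<noteq> l"

definition pt :: "int \<times> int \<Rightarrow> real \<times> real" where
  "pt i = (real_of_int (fst i), real_of_int (snd i))"

definition realization :: "(int \<times> int) set \<Rightarrow> (real \<times> real) set" where
  "realization V =
     pt ` V
     \<union> (\<Union>{closed_segment (pt i) (pt j) | i j. edge V i j})
     \<union> (\<Union>{cbox (pt (a,b)) (pt (a+1,b+1)) | a b.
            (a,b) \<in> V \<and> (a+1,b) \<in> V \<and> (a,b+1) \<in> V \<and> (a+1,b+1) \<in> V})"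

definition simply_connected_vertex_set :: "(int \<times> int) set \<Rightarrow> bool" where
  "simply_connected_vertex_set V \<longleftrightarrow>
     path_connected (realization V) \<and> simply_connected (realization V)"

definition legendre_map :: "(int \<times> int) set \<Rightarrow> (int \<times> int \<Rightarrow> (real^6) set) \<Rightarrow> bool" where
  "legendre_map V f \<longleftrightarrow>
     (\<forall>i\<in>V. contact_element (f i)) \<and>
     (\<forall>i j. edge V i j \<longrightarrow> (\<exists>s. s \<noteq> 0 \<and> s \<in> f i \<inter> f j))"

definition envelops :: "(int \<times> int) set \<Rightarrow> (int \<times> int \<Rightarrow> (real^6) set) \<Rightarrow> (int \<times> int \<Rightarrow> real^6) \<Rightarrow> bool" where
  "envelops V f r \<longleftrightarrow> (\<forall>i\<in>V. r i \<in> f i)"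

text \<open>Circular net (points with four concircular points on each face, i.e. the four
  homogeneous coordinate vectors are linearly dependent).\<close>
definition circular_net :: "(int \<times> int) set \<Rightarrow> (int \<times> int \<Rightarrow> real^6) \<Rightarrow> bool" where
  "circular_net V x \<longleftrightarrow>
     (\<forall>i j k l. is_face V i j k l \<longrightarrow> dim (span {x i, x j, x k, x l}) \<le> 3)"

definition totally_umbilic :: "(int \<times> int) set \<Rightarrow> (int \<times> int \<Rightarrow> (real^6) set) \<Rightarrow> bool" where
  "totally_umbilic V f \<longleftrightarrow> legendre_map V f \<and>
     (\<exists>n. n \<noteq> 0 \<and> (\<forall>i j. edge V i j \<longrightarrow> n \<in> f i \<inter> f j)) \<and>
     (\<forall>q. point_sphere_complex q \<longrightarrow> circular_net V (\<lambda>i. point_sphere q (f i)))"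

text \<open>A 3-dim subspace with signature (a,b), a+b=3, given by a basis with diagonal Gram matrix.\<close>
definition sig3 :: "(real^6) set \<Rightarrow> real \<Rightarrow> real \<Rightarrow> real \<Rightarrow> bool" where
  "sig3 W s1 s2 s3 \<longleftrightarrow> (\<exists>e1 e2 e3. W = span {e1, e2, e3} \<and>
      lf e1 e1 = s1 \<and> lf e2 e2 = s2 \<and> lf e3 e3 = s3 \<and>
      lf e1 e2 = 0 \<and> lf e1 e3 = 0 \<and> lf e2 e3 = 0)"

definition ribaucour :: "(int \<times> int) set \<Rightarrow> (int \<times> int \<Rightarrow> real^6) \<Rightarrow> bool" where
  "ribaucour V r \<longleftrightarrow> (\<forall>i\<in>V. lightlike (r i)) \<and>
     (\<forall>i j k l. is_face V i j k l \<longrightarrow>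
        (let W = span {r i, r j, r k, r l} in sig3 W 1 1 (-1) \<or> sig3 W 1 (-1) (-1)))"

definition isothermic :: "(int \<times> int) set \<Rightarrow> (int \<times> int \<Rightarrow> real^6) \<Rightarrow> bool" where
  "isothermic V x \<longleftrightarrow>
     (\<forall>i j k l. is_face V i j k l \<longrightarrow> dim (span {x i, x j, x k, x l}) \<le> 3) \<and>
     (\<exists>a :: int \<times> int \<Rightarrow> int \<times> int \<Rightarrow> real.
        (\<forall>i j. edge V i j \<longrightarrow> a i j = a j i \<and> a i j \<noteq> 0) \<and>
        (\<forall>i j k l. is_face V i j k l \<longrightarrow>
            a i j = a k l \<and> a j k = a l i \<and> cr (x i) (x j) (x k) (x l) = a i j / a j k))"

end

theory Submission
  imports Defs
begin


lemma exhaust_6: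
  fixes x :: 6
  shows "x = 1 \<or> x = 2 \<or> x = 3 \<or> x = 4 \<or> x = 5 \<or> x = 6"
proof (induct x)
  case (of_int z)
  then have "z = 0 \<or> z = 1 \<or> z = 2 \<or> z = 3 \<or> z = 4 \<or> z = 5" by fastforce
  then show ?case by auto
qed

lemma lf_sym: "lf x y = lf y x" by (simp add: lf_def algebra_simps)
lemma lf_add_left: "lf (x + y) z = lf x z + lf y z" by (simp add: lf_def algebra_simps)
lemma lf_add_right: "lf z (x + y) = lf z x + lf z y" by (simp add: lf_def algebra_simps)
lemma lf_diff_left: "lf (x - y) z = lf x z - lf y z" by (simp add: lf_def algebra_simps)
lemma lf_diff_right: "lf z (x - y) = lf z x - lf z y" by (simp add: lf_def algebra_simps)
lemma lf_scale_left: "lf (c *\<^sub>R x) z = c * lf x z" by (simp add: lf_def algebra_simps)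
lemma lf_scale_right: "lf z (c *\<^sub>R x) = c * lf z x" by (simp add: lf_def algebra_simps)
lemmas lf_simps = lf_add_left lf_add_right lf_diff_left lf_diff_right lf_scale_left lf_scale_right

lemma lf_linear: "linear (lf z)"
  by (rule linearI) (simp_all add: lf_simps)

lemma lf_zero_span: "(\<And>w. w \<in> S \<Longrightarrow> lf z w = 0) \<Longrightarrow> x \<in> span S \<Longrightarrow> lf z x = 0"
  using linear_eq_0_on_span[OF lf_linear] by blast

lemma span3: "z \<in> span {a, b, c} \<Longrightarrow> \<exists>x y w. z = x *\<^sub>R a + y *\<^sub>R b + w *\<^sub>R c"
proof -
  assume "z \<in> span {a, b, c}"
  then obtain x where "z - x *\<^sub>R a \<in> span {b, c}" by (auto simp: span_breakdown_eq)
  then obtain y where "z - x *\<^sub>R a - y *\<^sub>R b \<in> span {c}" by (auto simp: span_breakdown_eq)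
  then obtain w where "z - x *\<^sub>R a - y *\<^sub>R b = w *\<^sub>R c" by (auto simp: span_singleton)
  then have "z = x *\<^sub>R a + y *\<^sub>R b + w *\<^sub>R c" by (simp add: algebra_simps)
  then show ?thesis by blast
qed

lemma sig3_nondeg:
  assumes "sig3 W s1 s2 s3" "s1 \<noteq> 0" "s2 \<noteq> 0" "s3 \<noteq> 0"
    and "z \<in> W" and "\<And>w. w \<in> W \<Longrightarrow> lf z w = 0"
  shows "z = 0"
proof -
  obtain e1 e2 e3 where W: "W = span {e1, e2, e3}" and e: "lf e1 e1 = s1" "lf e2 e2 = s2" "lf e3 e3 = s3"
    "lf e1 e2 = 0" "lf e1 e3 = 0" "lf e2 e3 = 0"
    using assms(1) unfolding sig3_def by blast
  obtain a b c where z: "z = a *\<^sub>R e1 + b *\<^sub>R e2 + c *\<^sub>R e3" using span3 assms(5) W by blast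
  have "lf z e1 = 0" "lf z e2 = 0" "lf z e3 = 0" using assms(6) W by (auto intro: span_base)
  then have "a * s1 = 0" "b * s2 = 0" "c * s3 = 0"
    unfolding z using e by (auto simp: lf_simps lf_sym[of e2 e1] lf_sym[of e3 e1] lf_sym[of e3 e2])
  then show ?thesis using z assms by simp
qed

lemma null2:
  assumes W: "contact_element W" and x: "x \<in> W" and y: "y \<in> W"
    and xp: "lf x p = 0" and yp: "lf y p = 0" and pp: "lf p p = -1" and y0: "y \<noteq> 0"
  shows "x \<in> span {y}"
proof (rule ccontr)
  assume nx: "x \<notin> span {y}"
  have sW: "subspace W" and nullW: "\<And>a b. a \<in> W \<Longrightarrow> b \<in> W \<Longrightarrow> lf a b = 0"
    using W unfolding contact_element_def by auto
  have sxy: "span {x, y} \<subseteq> W" using sW x y by (simp add: span_minimal)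
  have pn: "p \<notin> span {x, y}" using sxy nullW pp by fastforce
  have "dim {y} = 1" using y0 by (simp add: dim_insert)
  then have "dim {x, y} = 2" using nx by (simp add: dim_insert)
  then have d3: "dim {p, x, y} = 3" using pn by (simp add: dim_insert)
  define U where "U = span {p, x, y}"
  define h where "h = (\<lambda>z::real^6. (z$5, z$6))"
  have lh: "linear h" unfolding h_def by (rule linearI) auto
  have ker: "z = 0" if zU: "z \<in> U" and hz: "h z = 0" for z
  proof -
    obtain c where ws: "z - c *\<^sub>R p \<in> span {x, y}" using zU unfolding U_def by (auto simp: span_breakdown_eq)
    define w where "w = z - c *\<^sub>R p"
    have w: "w \<in> W" using ws sxy unfolding w_def by blast
    have zw: "z = c *\<^sub>R p + w" unfolding w_def by simp
    have "lf w w = 0" using nullW w by blast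
    moreover have "lf p w = 0"
    proof (rule lf_zero_span[of "{x, y}"])
      fix v assume "v \<in> {x, y}" then show "lf p v = 0" using xp yp lf_sym[of p] by auto
    next
      show "w \<in> span {x, y}" using ws unfolding w_def .
    qed
    ultimately have lzz: "lf z z = - (c * c)" unfolding zw using pp
      by (simp add: lf_simps lf_sym[of w p])
    have z56: "z$5 = 0" "z$6 = 0" using hz by (auto simp: h_def zero_prod_def)
    have lzz2: "lf z z = (z$1)^2 + (z$2)^2 + (z$3)^2 + (z$4)^2"
      using z56 by (simp add: lf_def power2_eq_square)
    have "(z$1)^2 + (z$2)^2 + (z$3)^2 + (z$4)^2 + c * c = 0" using lzz lzz2 by simp
    then have "(z$1)^2 = 0 \<and> (z$2)^2 = 0 \<and> (z$3)^2 = 0 \<and> (z$4)^2 = 0"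
      by (smt (verit) zero_le_power2 zero_le_square)
    then have "\<forall>i. z$i = 0" using z56 by (metis exhaust_6 power_zero_numeral zero_eq_power2)
    then show ?thesis by (simp add: vec_eq_iff)
  qed
  have "inj_on h (span U)"
  proof (rule inj_onI)
    fix a b assume "a \<in> span U" "b \<in> span U" "h a = h b"
    then have "a - b \<in> U" "h (a - b) = 0" using lh unfolding U_def
      by (auto simp: span_diff linear_diff span_span)
    then show "a = b" using ker by (metis eq_iff_diff_eq_0)
  qed
  then have "dim (h ` U) = dim U" using dim_image_eq[OF lh] by blast
  also have "\<dots> = 3" using d3 unfolding U_def by simp
  finally have "dim (h ` U) = 3" .
  moreover have "dim (h ` U) \<le> 2" using dim_subset_UNIV[of "h ` U"] by simp
  ultimately show False by simp
qed



lemma far_coord: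
  fixes z :: "real \<times> real"
  assumes "\<bar>fst z - x\<bar> \<ge> 1 \<or> \<bar>snd z - y\<bar> \<ge> 1"
  shows "dist z (x, y) \<ge> 1"
  using assms dist_fst_le[of z "(x,y)"] dist_snd_le[of z "(x,y)"]
  by (auto simp: dist_real_def)

lemma int_far:
  fixes a c :: int and s :: real
  assumes "real_of_int a \<le> s" "s \<le> real_of_int a + 1" "c \<noteq> a" "c \<noteq> a + 1"
  shows "\<bar>s - real_of_int c\<bar> \<ge> 1"
proof -
  have "c \<le> a - 1 \<or> c \<ge> a + 2" using assms(3,4) by linarith
  then have "real_of_int c \<le> real_of_int a - 1 \<or> real_of_int c \<ge> real_of_int a + 2"
    by (metis of_int_1 of_int_diff of_int_le_iff of_int_add of_int_numeral)
  then show ?thesis using assms(1,2) by linarith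
qed

lemma int_far2:
  fixes a c :: int
  assumes "c \<noteq> a"
  shows "\<bar>real_of_int a - real_of_int c\<bar> \<ge> 1"
proof -
  have "c \<le> a - 1 \<or> c \<ge> a + 1" using assms by linarith
  then have "real_of_int c \<le> real_of_int a - 1 \<or> real_of_int c \<ge> real_of_int a + 1"
    by (metis of_int_1 of_int_diff of_int_le_iff of_int_add)
  then show ?thesis by linarith
qed

lemma seg_far:
  assumes adj: "adjacent i j" and iv: "i \<noteq> v" and jv: "j \<noteq> v"
    and z: "z \<in> closed_segment (pt i) (pt j)"
  shows "dist z (pt v) \<ge> 1"
proof -
  obtain i1 i2 where i: "i = (i1, i2)" by (cases i)
  obtain j1 j2 where j: "j = (j1, j2)" by (cases j)
  obtain c d where v: "v = (c, d)" by (cases v)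
  obtain u where u: "0 \<le> u" "u \<le> 1" and zu: "z = (1 - u) *\<^sub>R pt i + u *\<^sub>R pt j"
    using z unfolding closed_segment_def by blast
  have fz: "fst z = (1 - u) * i1 + u * j1" and sz: "snd z = (1 - u) * i2 + u * j2"
    using zu by (simp_all add: i j pt_def)
  have "(i2 = j2 \<and> (j1 = i1 + 1 \<or> i1 = j1 + 1)) \<or> (i1 = j1 \<and> (j2 = i2 + 1 \<or> i2 = j2 + 1))"
    using adj unfolding adjacent_def i j by auto
  then have "\<bar>fst z - c\<bar> \<ge> 1 \<or> \<bar>snd z - d\<bar> \<ge> 1"
  proof (elim disjE conjE)
    assume h: "i2 = j2" "j1 = i1 + 1"
    show ?thesis
    proof (cases "d = i2")
      case True
      then have "c \<noteq> i1" "c \<noteq> i1 + 1" using iv jv h unfolding i j v by auto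
      moreover have "real_of_int i1 \<le> fst z" "fst z \<le> real_of_int i1 + 1"
        using fz h u by (auto simp: algebra_simps)
      ultimately show ?thesis using int_far by blast
    next
      case False
      then show ?thesis using sz h int_far2[of d i2] by (auto simp: algebra_simps)
    qed
  next
    assume h: "i2 = j2" "i1 = j1 + 1"
    show ?thesis
    proof (cases "d = i2")
      case True
      then have "c \<noteq> j1" "c \<noteq> j1 + 1" using iv jv h unfolding i j v by auto
      moreover have "real_of_int j1 \<le> fst z" "fst z \<le> real_of_int j1 + 1"
        using fz h u by (auto simp: algebra_simps)
      ultimately show ?thesis using int_far by blast
    next
      case False
      then show ?thesis using sz h int_far2[of d i2] by (auto simp: algebra_simps)
    qed
  next
    assume h: "i1 = j1" "j2 = i2 + 1"
    show ?thesis
    proof (cases "c = i1")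
      case True
      then have "d \<noteq> i2" "d \<noteq> i2 + 1" using iv jv h unfolding i j v by auto
      moreover have "real_of_int i2 \<le> snd z" "snd z \<le> real_of_int i2 + 1"
        using sz h u by (auto simp: algebra_simps)
      ultimately show ?thesis using int_far by blast
    next
      case False
      then show ?thesis using fz h int_far2[of c i1] by (auto simp: algebra_simps)
    qed
  next
    assume h: "i1 = j1" "i2 = j2 + 1"
    show ?thesis
    proof (cases "c = i1")
      case True
      then have "d \<noteq> j2" "d \<noteq> j2 + 1" using iv jv h unfolding i j v by auto
      moreover have "real_of_int j2 \<le> snd z" "snd z \<le> real_of_int j2 + 1"
        using sz h u by (auto simp: algebra_simps)
      ultimately show ?thesis using int_far by blast
    next
      case False
      then show ?thesis using fz h int_far2[of c i1] by (auto simp: algebra_simps)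
    qed
  qed
  then show ?thesis using far_coord v pt_def by simp
qed

lemma box_far:
  assumes "\<not> (v = (a,b) \<or> v = (a+1,b) \<or> v = (a,b+1) \<or> v = (a+1,b+1))"
    and z: "z \<in> cbox (pt (a,b)) (pt (a+1,b+1))"
  shows "dist z (pt v) \<ge> 1"
proof -
  obtain c d where v: "v = (c, d)" by (cases v)
  have f: "real_of_int a \<le> fst z" "fst z \<le> real_of_int a + 1"
   and s: "real_of_int b \<le> snd z" "snd z \<le> real_of_int b + 1"
    using z by (auto simp: pt_def cbox_Pair_eq mem_Times_iff)
  have "(c \<noteq> a \<and> c \<noteq> a + 1) \<or> (d \<noteq> b \<and> d \<noteq> b + 1)" using assms(1) v by auto
  then have "\<bar>fst z - c\<bar> \<ge> 1 \<or> \<bar>snd z - d\<bar> \<ge> 1" using int_far f s by blast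
  then show ?thesis using far_coord v pt_def by simp
qed

lemma adjacent_sym: "adjacent i j \<Longrightarrow> adjacent j i"
  unfolding adjacent_def by (simp add: abs_minus_commute)

lemma isolated_far:
  assumes vV: "v \<in> V" and iso: "\<forall>j. \<not> edge V v j"
    and z: "z \<in> realization V" and zv: "z \<noteq> pt v"
  shows "dist z (pt v) \<ge> 1"
  using z unfolding realization_def
proof (elim UnE)
  assume "z \<in> pt ` V"
  then obtain w where w: "w \<in> V" "z = pt w" by blast
  obtain c d where v: "v = (c, d)" by (cases v)
  obtain e f where ww: "w = (e, f)" by (cases w)
  have "e \<noteq> c \<or> f \<noteq> d" using zv w v ww by auto
  then have "\<bar>fst z - c\<bar> \<ge> 1 \<or> \<bar>snd z - d\<bar> \<ge> 1"
    using w ww int_far2[of c e] int_far2[of d f] by (auto simp: pt_def)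
  then show ?thesis using far_coord v pt_def by simp
next
  assume "z \<in> \<Union>{closed_segment (pt i) (pt j) | i j. edge V i j}"
  then obtain i j where e: "edge V i j" and zs: "z \<in> closed_segment (pt i) (pt j)" by blast
  have "i \<noteq> v" using e iso by blast
  moreover have "j \<noteq> v" using e iso adjacent_sym unfolding edge_def by blast
  ultimately show ?thesis using seg_far e zs unfolding edge_def by blast
next
  assume "z \<in> \<Union>{cbox (pt (a,b)) (pt (a+1,b+1)) | a b.
            (a,b) \<in> V \<and> (a+1,b) \<in> V \<and> (a,b+1) \<in> V \<and> (a+1,b+1) \<in> V}"
  then obtain a b where c: "(a,b) \<in> V" "(a+1,b) \<in> V" "(a,b+1) \<in> V" "(a+1,b+1) \<in> V"
    and zb: "z \<in> cbox (pt (a,b)) (pt (a+1,b+1))" by blast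
  have "\<not> (v = (a,b) \<or> v = (a+1,b) \<or> v = (a,b+1) \<or> v = (a+1,b+1))"
  proof
    assume "v = (a,b) \<or> v = (a+1,b) \<or> v = (a,b+1) \<or> v = (a+1,b+1)"
    then show False using iso c unfolding edge_def adjacent_def by (elim disjE) force+
  qed
  then show ?thesis using box_far zb by blast
qed

lemma isolated_disconnected:
  assumes vV: "v \<in> V" and wV: "w \<in> V" and wv: "w \<noteq> v" and iso: "\<forall>j. \<not> edge V v j"
  shows "\<not> connected (realization V)"
proof
  assume con: "connected (realization V)"
  let ?S = "realization V"
  have vS: "pt v \<in> ?S" and wS: "pt w \<in> ?S" using vV wV unfolding realization_def by auto
  have eq: "{pt v} = ?S \<inter> ball (pt v) 1"
    using isolated_far[OF vV iso] vS by (force simp: dist_commute)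
  have "openin (top_of_set ?S) {pt v}" unfolding eq by (simp add: openin_open_Int)
  moreover have "closedin (top_of_set ?S) {pt v}" using vS closedin_closed_Int[of "{pt v}" ?S] by (metis closed_singleton Int_absorb1 empty_subsetI insert_subset)
  ultimately have "{pt v} = ?S" using con vS unfolding connected_clopen by blast
  moreover have "pt w \<noteq> pt v" using wv by (auto simp: pt_def prod_eq_iff)
  ultimately show False using wS by blast
qed



lemma face_rep:
  assumes U: "contact_element U" and nU: "n \<in> U" and n0: "n \<noteq> 0" and rU: "rm \<in> U"
    and rn: "rm \<notin> span {n}" and np: "lf n p \<noteq> 0"
  shows "\<exists>\<alpha> \<beta>. \<beta> \<noteq> 0 \<and> point_sphere p U = \<alpha> *\<^sub>R n + \<beta> *\<^sub>R rm"
proof -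
  have sU: "subspace U" and dU: "dim U = 2" using U unfolding contact_element_def by auto
  define wit where "wit = lf n p *\<^sub>R rm - lf rm p *\<^sub>R n"
  have witU: "wit \<in> U" unfolding wit_def using sU nU rU
    by (simp add: subspace_diff subspace_scale)
  have witp: "lf wit p = 0" unfolding wit_def by (simp add: lf_simps)
  have wit0: "wit \<noteq> 0"
  proof
    assume "wit = 0"
    then have e: "lf n p *\<^sub>R rm = lf rm p *\<^sub>R n" unfolding wit_def by simp
    have "rm = (1 / lf n p) *\<^sub>R (lf n p *\<^sub>R rm)" using np by simp
    also have "\<dots> = (lf rm p / lf n p) *\<^sub>R n" unfolding e by simp
    finally have "rm \<in> range (\<lambda>k. k *\<^sub>R n)" by blast
    then show False using rn by (simp add: span_singleton)
  qed
  define x where "x = point_sphere p U"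
  have x: "x \<in> U \<and> x \<noteq> 0 \<and> lf x p = 0" unfolding x_def point_sphere_def
    by (rule someI[of _ wit]) (use witU wit0 witp in auto)
  have ind: "independent {rm, n}"
    using rn n0 by (auto simp: independent_insert)
  have rnn: "rm \<noteq> n" using rn span_base[of n "{n}"] by auto
  have "U \<subseteq> span {rm, n}"
    by (rule card_ge_dim_independent) (use nU rU ind dU rnn in \<open>auto simp: span_base\<close>)
  then have "x \<in> span {rm, n}" using x by blast
  then obtain \<beta> where "x - \<beta> *\<^sub>R rm \<in> span {n}" by (auto simp: span_breakdown_eq)
  then obtain \<alpha> where "x - \<beta> *\<^sub>R rm = \<alpha> *\<^sub>R n" by (auto simp: span_singleton)
  then have xe: "x = \<alpha> *\<^sub>R n + \<beta> *\<^sub>R rm" by (simp add: algebra_simps)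
  have "\<beta> \<noteq> 0"
  proof
    assume "\<beta> = 0"
    then have "x = \<alpha> *\<^sub>R n" using xe by simp
    then have "lf (\<alpha> *\<^sub>R n) p = 0" using x by simp
    then have "\<alpha> * lf n p = 0" by (simp only: lf_scale_left)
    then have "\<alpha> = 0" using np by simp
    then show False using x \<open>x = \<alpha> *\<^sub>R n\<close> by simp
  qed
  moreover have "point_sphere p U = \<alpha> *\<^sub>R n + \<beta> *\<^sub>R rm" using xe unfolding x_def .
  ultimately show ?thesis by blast
qed



lemma crs:
  fixes bi bj bk bl A B C D :: real
  assumes "bi \<noteq> 0" "bj \<noteq> 0" "bk \<noteq> 0" "bl \<noteq> 0"
  shows "((bi*bj)*A)*((bk*bl)*B)/(((bj*bk)*C)*((bl*bi)*D)) = A*B/(C*D)"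
proof -
  have "((bi*bj)*A)*((bk*bl)*B) = (bi*bj*bk*bl)*(A*B)" by (simp add: algebra_simps)
  moreover have "((bj*bk)*C)*((bl*bi)*D) = (bi*bj*bk*bl)*(C*D)" by (simp add: algebra_simps)
  ultimately show ?thesis using assms by simp
qed

lemma sig3_dim: "sig3 W a b c \<Longrightarrow> dim W \<le> 3"
proof -
  assume "sig3 W a b c"
  then obtain e1 e2 e3 where W: "W = span {e1, e2, e3}" unfolding sig3_def by blast
  have "dim W = dim {e1, e2, e3}" unfolding W by simp
  also have "\<dots> \<le> card {e1, e2, e3}" by (rule dim_le_card') simp
  also have "\<dots> \<le> 3" by (simp add: card_insert_if)
  finally show ?thesis .
qed

theorem mainTheorem18:
  fixes p :: "real^6"
    and V :: "(int \<times> int) set"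
    and r :: "int \<times> int \<Rightarrow> real^6"
    and u :: "int \<times> int \<Rightarrow> (real^6) set"
  assumes "simply_connected_vertex_set V"
    and "point_sphere_complex p"
    and "ribaucour V r"
    and "totally_umbilic V u"
    and "envelops V u r"
    and "\<exists>i\<in>V. \<exists>j\<in>V. \<not> same_point (point_sphere p (u i)) (point_sphere p (u j))"
  shows "(\<forall>i j k l. is_face V i j k l \<longrightarrow>
            cr (r i) (r j) (r k) (r l) =
            cr (point_sphere p (u i)) (point_sphere p (u j)) (point_sphere p (u k)) (point_sphere p (u l)))
         \<and> (isothermic V (\<lambda>i. point_sphere p (u i)) \<longleftrightarrow> isothermic V r)"
proof -
  from assms(4) obtain n where n0: "n \<noteq> 0" and nE: "\<forall>i j. edge V i j \<longrightarrow> n \<in> u i \<inter> u j"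
    and lm: "legendre_map V u"
    and circ: "\<forall>q. point_sphere_complex q \<longrightarrow> circular_net V (\<lambda>i. point_sphere q (u i))"
    unfolding totally_umbilic_def by blast
  have ce: "\<And>i. i \<in> V \<Longrightarrow> contact_element (u i)" using lm unfolding legendre_map_def by blast
  have nullU: "\<And>i a b. i \<in> V \<Longrightarrow> a \<in> u i \<Longrightarrow> b \<in> u i \<Longrightarrow> lf a b = 0"
    using ce unfolding contact_element_def by blast
  have pp: "lf p p = -1" using assms(2) unfolding point_sphere_complex_def .
  define ps where "ps = (\<lambda>i. point_sphere p (u i))"
  have np: "lf n p \<noteq> 0"
  proof
    assume np0: "lf n p = 0"
    obtain i0 j0 where ij: "i0 \<in> V" "j0 \<in> V" "\<not> same_point (ps i0) (ps j0)"
      using assms(6) unfolding ps_def by blast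
    have ij0: "i0 \<noteq> j0"
    proof
      assume "i0 = j0"
      then have "same_point (ps i0) (ps j0)" unfolding same_point_def
        by (intro exI[of _ 1]) simp
      then show False using ij by blast
    qed
    have con: "connected (realization V)"
      using assms(1) path_connected_imp_connected unfolding simply_connected_vertex_set_def by blast
    have hasE: "\<exists>j. edge V v j" if vV: "v \<in> V" for v
    proof (rule ccontr)
      assume "\<nexists>j. edge V v j"
      then have iso: "\<forall>j. \<not> edge V v j" by blast
      obtain w where "w \<in> V" "w \<noteq> v" using ij ij0 by metis
      then show False using isolated_disconnected[OF vV _ _ iso] con by blast
    qed
    have sc: "\<exists>c. c \<noteq> 0 \<and> ps v = c *\<^sub>R n" if vV: "v \<in> V" for v
    proof -
      obtain j where "edge V v j" using hasE vV by blast
      then have nu: "n \<in> u v" using nE by blast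
      have x: "ps v \<in> u v \<and> ps v \<noteq> 0 \<and> lf (ps v) p = 0" unfolding ps_def point_sphere_def
        by (rule someI[of _ n]) (use nu n0 np0 in auto)
      have "ps v \<in> span {n}"
        using null2[OF ce[OF vV], of "ps v" n p] x nu np0 pp n0 by blast
      then obtain c where c: "ps v = c *\<^sub>R n" by (auto simp: span_singleton)
      then have "c \<noteq> 0" using x by auto
      then show ?thesis using c by blast
    qed
    obtain ci where ci: "ci \<noteq> 0" "ps i0 = ci *\<^sub>R n" using sc ij by blast
    obtain cj where cj: "cj \<noteq> 0" "ps j0 = cj *\<^sub>R n" using sc ij by blast
    have "ps j0 = (cj / ci) *\<^sub>R ps i0" using ci cj by simp
    then have "same_point (ps i0) (ps j0)" unfolding same_point_def using ci cj
      by (intro exI[of _ "cj / ci"]) simp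
    then show False using ij by blast
  qed
  have rl: "\<And>i. i \<in> V \<Longrightarrow> lightlike (r i)" using assms(3) unfolding ribaucour_def by blast
  have ru: "\<And>i. i \<in> V \<Longrightarrow> r i \<in> u i" using assms(5) unfolding envelops_def by blast
  have faceeq: "cr (ps i) (ps j) (ps k) (ps l) = cr (r i) (r j) (r k) (r l)"
    if F: "is_face V i j k l" for i j k l
  proof -
    have E: "edge V i j" "edge V j k" "edge V k l" "edge V l i" using F unfolding is_face_def by auto
    have inV: "m \<in> V" if "m \<in> {i, j, k, l}" for m using E that unfolding edge_def by auto
    have nu: "n \<in> u m" if "m \<in> {i, j, k, l}" for m using E that nE by blast
    have nr: "lf n (r m) = 0" if "m \<in> {i, j, k, l}" for m
      using nullU[OF inV[OF that] nu[OF that] ru[OF inV[OF that]]] .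
    have nn: "lf n n = 0" using nullU[OF inV nu nu, of i] by simp
    define W where "W = span {r i, r j, r k, r l}"
    have sg: "sig3 W 1 1 (-1) \<or> sig3 W 1 (-1) (-1)"
      using assms(3) F unfolding ribaucour_def W_def Let_def by blast
    have nondeg: "z = 0" if "z \<in> W" "\<And>w. w \<in> {r i, r j, r k, r l} \<Longrightarrow> lf z w = 0" for z
    proof -
      have "\<And>w. w \<in> W \<Longrightarrow> lf z w = 0" unfolding W_def using lf_zero_span that(2) by blast
      then show ?thesis using sg sig3_nondeg[of W] that(1) by force
    qed
    have rn: "r m \<notin> span {n}" if mF: "m \<in> {i, j, k, l}" for m
    proof
      assume "r m \<in> span {n}"
      then obtain c where c: "r m = c *\<^sub>R n" by (auto simp: span_singleton)
      have "r m \<in> W" unfolding W_def using mF by (auto intro: span_base)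
      moreover have "lf (r m) w = 0" if "w \<in> {r i, r j, r k, r l}" for w
      proof -
        have "lf n w = 0" using that nr by blast
        then show ?thesis by (simp add: c lf_simps)
      qed
      ultimately have "r m = 0" using nondeg by blast
      then show False using rl[OF inV[OF mF]] unfolding lightlike_def by blast
    qed
    have rep: "\<exists>\<alpha> \<beta>. \<beta> \<noteq> 0 \<and> ps m = \<alpha> *\<^sub>R n + \<beta> *\<^sub>R r m" if mF: "m \<in> {i, j, k, l}" for m
      unfolding ps_def
      using face_rep[OF ce[OF inV[OF mF]] nu[OF mF] n0 ru[OF inV[OF mF]] rn[OF mF] np] .
    have bil: "lf (a1 *\<^sub>R n + b1 *\<^sub>R r m1) (a2 *\<^sub>R n + b2 *\<^sub>R r m2) = (b1 * b2) * lf (r m1) (r m2)"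
      if "m1 \<in> {i, j, k, l}" "m2 \<in> {i, j, k, l}" for a1 b1 a2 b2 m1 m2
      using nr[OF that(1)] nr[OF that(2)] nn lf_sym[of "r m1" n]
      by (simp add: lf_simps)
    obtain ai bi where bi: "bi \<noteq> 0" "ps i = ai *\<^sub>R n + bi *\<^sub>R r i" using rep by blast
    obtain aj bj where bj: "bj \<noteq> 0" "ps j = aj *\<^sub>R n + bj *\<^sub>R r j" using rep by blast
    obtain ak bk where bk: "bk \<noteq> 0" "ps k = ak *\<^sub>R n + bk *\<^sub>R r k" using rep by blast
    obtain al bl where bl: "bl \<noteq> 0" "ps l = al *\<^sub>R n + bl *\<^sub>R r l" using rep by blast
    have "cr (ps i) (ps j) (ps k) (ps l) =
      ((bi*bj)*lf (r i) (r j))*((bk*bl)*lf (r k) (r l))/(((bj*bk)*lf (r j) (r k))*((bl*bi)*lf (r l) (r i)))"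
      unfolding cr_def bi(2) bj(2) bk(2) bl(2) by (simp only: bil insertI1 insertI2)
    also have "\<dots> = cr (r i) (r j) (r k) (r l)" unfolding cr_def using crs[OF bi(1) bj(1) bk(1) bl(1)] .
    finally show ?thesis .
  qed
  have P1: "dim (span {ps i, ps j, ps k, ps l}) \<le> 3" if "is_face V i j k l" for i j k l
    using circ assms(2) that unfolding circular_net_def ps_def by blast
  have P2: "dim (span {r i, r j, r k, r l}) \<le> 3" if F: "is_face V i j k l" for i j k l
    using assms(3) F sig3_dim unfolding ribaucour_def Let_def by blast
  have "isothermic V ps \<longleftrightarrow> isothermic V r"
    unfolding isothermic_def using P1 P2 faceeq by auto
  then show ?thesis using faceeq unfolding ps_def by auto
qed


end
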